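(* Let $N,n_{\mathrm{el}}\ge1$, masses $m_1,\dots,m_N>0$ and $M=\mathrm{diag}(m_1I_3,\dots,m_NI_3)\in\mathbb{R}^{3N\times3N}$. Let $V_{\mathrm{ext}}:\mathbb{R}^{3N}\to\mathbb{R}$ be continuously differentiable. For $i=1,\dots,n_{\mathrm{el}}$ let $k_i>0$, $l_{0,i}>0$ and constants $a_{ij}\in\mathbb{R}$ ($j=1,\dots,N$). Writing $q=(q_1,\dots,q_N)$, $v=(v_1,\dots,v_N)$ with $q_j,v_j\in\mathbb{R}^3$, define $\tilde C_i(q)=\frac{\bar q_i\cdot\bar q_i}{l_{0,i}^2}$ with $\bar q_i=\sum_{j=1}^Na_{ij}q_j$, and $V_{\mathrm{int}}(C)=\sum_{i=1}^{n_{\mathrm{el}}}\frac{k_il_{0,i}}{4}(C_i-\ln C_i-1)$ for $C\in(0,\infty)^{n_{\mathrm{el}}}$. Let $(q,v,C)$ be a $C^1$ solution on $[t_0,t_{\mathrm{end}}]$ (with $C(t)\in(0,\infty)^{n_{\mathrm{el}}}$) of $$\dot q=v,\qquad M\dot v=-\nabla V_{\mathrm{ext}}(q)-D\tilde C(q)^{\mathrm T}\nabla V_{\mathrm{int}}(C),\qquad \dot C=D\tilde C(q)\,v,$$ where $D\tilde C(q)$ is the Jacobian of $\tilde C$. Let $L=\sum_{k=1}^N q_k\times m_kv_k$ be the total angular momentum. Then $\frac{d}{dt}L=-\sum_{k=1}^N q_k\times\nabla_{q_k}V_{\mathrm{ext}}(q)$. Consequently, if there is a constant vector $b\in\mathbb{R}^3$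 with $-\nabla_{q_k}V_{\mathrm{ext}}(q)=b$ for all $k$ and all $q$, then $\frac{d}{dt}(L\cdot b)=0$.
   Context: $\nabla_{q_k}V_{\mathrm{ext}}(q)\in\mathbb{R}^3$ denotes the $k$-th three-dimensional block of the gradient $\nabla V_{\mathrm{ext}}(q)\in\mathbb{R}^{3N}$. The system is the input-free port-Hamiltonian model of $N$ point masses connected by $n_{\mathrm{el}}$ hyperelastic springs with strains $C$ as independent state. *)

theory Defs
  imports "HOL-Analysis.Analysis"
begin

definition grad :: "('a::euclidean_space \<Rightarrow> real) \<Rightarrow> 'a \<Rightarrow> 'a" where
  "grad f x = (THE g. (f has_derivative (\<lambda>h. g \<bullet> h)) (at x))"

text \<open>Configurations q = (q_1,...,q_N) in (R^3)^N, indexed by a finite type 'n;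
  springs indexed by a finite type 'e.\<close>
definition qbar :: "('e \<Rightarrow> 'n::finite \<Rightarrow> real) \<Rightarrow> (real^3)^'n \<Rightarrow> 'e \<Rightarrow> real^3" where
  "qbar a q i = (\<Sum>j\<in>UNIV. a i j *\<^sub>R (q $ j))"

definition Ctilde :: "('e::finite \<Rightarrow> 'n::finite \<Rightarrow> real) \<Rightarrow> ('e \<Rightarrow> real) \<Rightarrow> (real^3)^'n \<Rightarrow> real^'e" where
  "Ctilde a l0 q = (\<chi> i. (qbar a q i \<bullet> qbar a q i) / (l0 i)\<^sup>2)"

definition Vint :: "('e::finite \<Rightarrow> real) \<Rightarrow> ('e \<Rightarrow> real) \<Rightarrow> real^'e \<Rightarrow> real" where
  "Vint k l0 C = (\<Sum>i\<in>UNIV. k i * l0 i / 4 * (C $ i - ln (C $ i) - 1))"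

definition Mmul :: "('n::finite \<Rightarrow> real) \<Rightarrow> (real^3)^'n \<Rightarrow> (real^3)^'n" where
  "Mmul m w = (\<chi> k. m k *\<^sub>R (w $ k))"

definition angmom :: "('n::finite \<Rightarrow> real) \<Rightarrow> (real^3)^'n \<Rightarrow> (real^3)^'n \<Rightarrow> real^3" where
  "angmom m q v = (\<Sum>k\<in>UNIV. cross3 (q $ k) (m k *\<^sub>R (v $ k)))"

end

theory Submission imports Defs begin

lemma vec_has_derivative_iff:
  fixes f :: "'a::real_normed_vector \<Rightarrow> real^'e::finite"
  shows "(f has_derivative f') F \<longleftrightarrow> (\<forall>i. ((\<lambda>x. f x $ i) has_derivative (\<lambda>h. f' h $ i)) F)"
proof
  assume "(f has_derivative f') F"
  then show "\<forall>i. ((\<lambda>x. f x $ i) has_derivative (\<lambda>h. f' h $ i)) F"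
    using bounded_linear.has_derivative[OF bounded_linear_vec_nth] by blast
next
  assume H: "\<forall>i. ((\<lambda>x. f x $ i) has_derivative (\<lambda>h. f' h $ i)) F"
  have "((\<lambda>x. \<Sum>i\<in>UNIV. (f x $ i) *\<^sub>R axis i (1::real)) has_derivative (\<lambda>h. \<Sum>i\<in>UNIV. (f' h $ i) *\<^sub>R axis i (1::real))) F"
    by (intro has_derivative_sum has_derivative_scaleR_left H[rule_format])
  moreover have "\<And>y::real^'e. (\<Sum>i\<in>UNIV. (y $ i) *\<^sub>R axis i (1::real)) = y"
    using basis_expansion by (metis (no_types, lifting) scalar_mult_eq_scaleR sum.cong)
  ultimately show "(f has_derivative f') F" by simp
qed

lemma qbar_linear: "bounded_linear (\<lambda>x. qbar a x i)"
  unfolding qbar_def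
  by (intro bounded_linear_sum bounded_linear_compose[OF bounded_linear_scaleR_right bounded_linear_vec_nth])

definition DC where "DC a l0 x = (\<lambda>h. (\<chi> i. 2 * (qbar a x i \<bullet> qbar a h i) / (l0 i)\<^sup>2))"

lemma Ctilde_deriv: "(Ctilde a l0 has_derivative DC a l0 x) (at x)"
  unfolding vec_has_derivative_iff
proof
  fix i
  have D: "((\<lambda>y. (qbar a y i \<bullet> qbar a y i) / (l0 i)\<^sup>2) has_derivative
       (\<lambda>h. (qbar a x i \<bullet> qbar a h i + qbar a h i \<bullet> qbar a x i) / (l0 i)\<^sup>2)) (at x)"
  proof -
    have Q: "((\<lambda>y. qbar a y i) has_derivative (\<lambda>h. qbar a h i)) (at x)"
      using bounded_linear.has_derivative[OF qbar_linear has_derivative_ident] .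
    have "((\<lambda>y. qbar a y i \<bullet> qbar a y i) has_derivative (\<lambda>h. qbar a x i \<bullet> qbar a h i + qbar a h i \<bullet> qbar a x i)) (at x)"
      using has_derivative_inner[OF Q Q] .
    from bounded_linear.has_derivative[OF bounded_linear_divide[of "(l0 i)\<^sup>2"] this]
    show ?thesis .
  qed
  show "((\<lambda>x. Ctilde a l0 x $ i) has_derivative (\<lambda>h. DC a l0 x h $ i)) (at x)"
    using D unfolding Ctilde_def DC_def by (simp add: inner_commute)
qed

lemma triple: "cross3 x w \<bullet> e = w \<bullet> cross3 e (x::real^3)"
  by (simp add: cross3_simps)

lemma cross_neg_diff: "cross3 x (- y - z) = - cross3 x y - cross3 (x::real^3) z"
  by (simp add: cross3_simps)

lemma cross_sum_right: "cross3 e (\<Sum>j\<in>A. f j) = (\<Sum>j\<in>A. cross3 e (f j))"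
proof -
  have "linear (cross3 e)" using bilinear_cross unfolding bilinear_def by blast
  then show ?thesis by (simp add: linear_sum)
qed

lemma adj_cross_zero:
  fixes x :: "(real^3)^'n::finite" and y :: "real^'e::finite"
  shows "(\<Sum>k\<in>UNIV. cross3 (x $ k) (adjoint (DC a l0 x) y $ k)) = 0"
proof -
  let ?w = "adjoint (DC a l0 x) y"
  have lin: "linear (DC a l0 x)"
    using Ctilde_deriv has_derivative_linear by blast
  have ze: "(\<Sum>k\<in>UNIV. cross3 (x $ k) (?w $ k)) \<bullet> e = 0" for e
  proof -
    define R :: "(real^3)^'n" where "R = (\<chi> k. cross3 e (x $ k))"
    have qR: "qbar a R i = cross3 e (qbar a x i)" for i
      unfolding qbar_def R_def by (simp add: cross_sum_right cross_mult_right)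
    have DR: "DC a l0 x R = 0"
      unfolding DC_def by (simp add: qR dot_cross_self vec_eq_iff)
    have "(\<Sum>k\<in>UNIV. cross3 (x $ k) (?w $ k)) \<bullet> e = (\<Sum>k\<in>UNIV. ?w $ k \<bullet> R $ k)"
      by (simp add: inner_sum_left triple R_def)
    also have "\<dots> = R \<bullet> ?w" unfolding inner_vec_def by (simp add: inner_commute mult.commute)
    also have "\<dots> = DC a l0 x R \<bullet> y" using adjoint_works[OF lin] .
    also have "\<dots> = 0" using DR by simp
    finally show ?thesis .
  qed
  show ?thesis using ze[of "(\<Sum>k\<in>UNIV. cross3 (x $ k) (?w $ k))"] by simp
qed

theorem mainTheorem2:
  fixes m :: "'n::finite \<Rightarrow> real"
    and Vext :: "(real^3)^'n \<Rightarrow> real"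
    and k l0 :: "'e::finite \<Rightarrow> real"
    and a :: "'e \<Rightarrow> 'n \<Rightarrow> real"
    and q v vd :: "real \<Rightarrow> (real^3)^'n"
    and C :: "real \<Rightarrow> real^'e"
    and t0 tend :: real
  assumes m_pos: "\<forall>j. m j > 0"
    and k_pos: "\<forall>i. k i > 0"
    and l0_pos: "\<forall>i. l0 i > 0"
    and Vext_diff: "\<forall>x. Vext differentiable (at x)"
    and Vext_C1: "continuous_on UNIV (grad Vext)"
    and t_lt: "t0 < tend"
    and C_pos: "\<forall>t\<in>{t0..tend}. \<forall>i. C t $ i > 0"
    and q_ode: "\<forall>t\<in>{t0..tend}. (q has_vector_derivative v t) (at t within {t0..tend})"
    and v_ode: "\<forall>t\<in>{t0..tend}. (v has_vector_derivative vd t) (at t within {t0..tend})"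
    and vd_cont: "continuous_on {t0..tend} vd"
    and M_eq: "\<forall>t\<in>{t0..tend}. Mmul m (vd t) =
        - grad Vext (q t)
        - adjoint (frechet_derivative (Ctilde a l0) (at (q t))) (grad (Vint k l0) (C t))"
    and C_ode: "\<forall>t\<in>{t0..tend}. (C has_vector_derivative
        frechet_derivative (Ctilde a l0) (at (q t)) (v t)) (at t within {t0..tend})"
  shows "(\<forall>t\<in>{t0..tend}. ((\<lambda>s. angmom m (q s) (v s)) has_vector_derivative
            - (\<Sum>j\<in>UNIV. cross3 (q t $ j) (grad Vext (q t) $ j))) (at t within {t0..tend}))
       \<and> (\<forall>b::real^3. (\<forall>x j. - (grad Vext x $ j) = b) \<longrightarrow>
            (\<forall>t\<in>{t0..tend}. ((\<lambda>s. angmom m (q s) (v s) \<bullet> b) has_real_derivative 0)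
                (at t within {t0..tend})))"
proof -
  let ?I = "{t0..tend}"
  have bb: "bounded_bilinear cross3"
    using bilinear_cross bilinear_conv_bounded_bilinear by blast
  have fd: "frechet_derivative (Ctilde a l0) (at x) = DC a l0 x" for x
    using frechet_derivative_at[OF Ctilde_deriv] by (rule sym)
  have part1: "((\<lambda>s. angmom m (q s) (v s)) has_vector_derivative
            - (\<Sum>j\<in>UNIV. cross3 (q t $ j) (grad Vext (q t) $ j))) (at t within ?I)"
    if t: "t \<in> ?I" for t
  proof -
    have qk: "((\<lambda>s. q s $ k) has_derivative (\<lambda>h. h *\<^sub>R (v t $ k))) (at t within ?I)" for k
      using bounded_linear.has_derivative[OF bounded_linear_vec_nth q_ode[rule_format, OF t, unfolded has_vector_derivative_def]]
      by simp
    have vk: "((\<lambda>s. m k *\<^sub>R (v s $ k)) has_derivative (\<lambda>h. h *\<^sub>R (m k *\<^sub>R (vd t $ k)))) (at t within ?I)" for k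
      using bounded_linear.has_derivative[OF bounded_linear_compose[OF bounded_linear_scaleR_right bounded_linear_vec_nth, of "m k" k] v_ode[rule_format, OF t, unfolded has_vector_derivative_def]]
      by (simp add: mult.commute)
    have S: "((\<lambda>s. angmom m (q s) (v s)) has_derivative
       (\<lambda>h. \<Sum>k\<in>UNIV. cross3 (q t $ k) (h *\<^sub>R (m k *\<^sub>R (vd t $ k))) + cross3 (h *\<^sub>R (v t $ k)) (m k *\<^sub>R (v t $ k)))) (at t within ?I)"
      unfolding angmom_def
      by (intro has_derivative_sum bounded_bilinear.FDERIV[OF bb qk vk])
    let ?w = "adjoint (DC a l0 (q t)) (grad (Vint k l0) (C t))"
    have ME: "m j *\<^sub>R (vd t $ j) = - (grad Vext (q t) $ j) - ?w $ j" for j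
      using M_eq[rule_format, OF t] unfolding fd Mmul_def by (simp add: vec_eq_iff)
    have "(\<Sum>k\<in>UNIV. cross3 (q t $ k) (m k *\<^sub>R (vd t $ k)))
        = - (\<Sum>j\<in>UNIV. cross3 (q t $ j) (grad Vext (q t) $ j)) - (\<Sum>j\<in>UNIV. cross3 (q t $ j) (?w $ j))"
      by (simp add: ME cross_neg_diff sum_subtractf sum_negf)
    also have "\<dots> = - (\<Sum>j\<in>UNIV. cross3 (q t $ j) (grad Vext (q t) $ j))"
      using adj_cross_zero by simp
    finally have E: "(\<Sum>k\<in>UNIV. cross3 (q t $ k) (m k *\<^sub>R (vd t $ k))) = - (\<Sum>j\<in>UNIV. cross3 (q t $ j) (grad Vext (q t) $ j))" .
    show ?thesis
      unfolding has_vector_derivative_def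
    proof (rule has_derivative_eq_rhs[OF S])
      show "(\<lambda>h. \<Sum>k\<in>UNIV. cross3 (q t $ k) (h *\<^sub>R (m k *\<^sub>R (vd t $ k))) + cross3 (h *\<^sub>R (v t $ k)) (m k *\<^sub>R (v t $ k)))
         = (\<lambda>h. h *\<^sub>R - (\<Sum>j\<in>UNIV. cross3 (q t $ j) (grad Vext (q t) $ j)))"
      proof
        fix h
        show "(\<Sum>k\<in>UNIV. cross3 (q t $ k) (h *\<^sub>R (m k *\<^sub>R (vd t $ k))) + cross3 (h *\<^sub>R (v t $ k)) (m k *\<^sub>R (v t $ k)))
         = h *\<^sub>R - (\<Sum>j\<in>UNIV. cross3 (q t $ j) (grad Vext (q t) $ j))"
          using E[symmetric] by (simp add: cross_mult_right cross_mult_left scaleR_sum_right)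
      qed
    qed
  qed
  show ?thesis
  proof (intro conjI ballI allI impI)
    fix t assume "t \<in> ?I" then show "((\<lambda>s. angmom m (q s) (v s)) has_vector_derivative
            - (\<Sum>j\<in>UNIV. cross3 (q t $ j) (grad Vext (q t) $ j))) (at t within ?I)" by (rule part1)
  next
    fix b :: "real^3" and t
    assume B: "\<forall>x j. - (grad Vext x $ j) = b" and t: "t \<in> ?I"
    have g: "grad Vext x $ j = - b" for x j using B by (metis minus_minus)
    have "((\<lambda>s. angmom m (q s) (v s) \<bullet> b) has_derivative (\<lambda>h. (h *\<^sub>R - (\<Sum>j\<in>UNIV. cross3 (q t $ j) (grad Vext (q t) $ j))) \<bullet> b)) (at t within ?I)"
      using bounded_linear.has_derivative[OF bounded_linear_inner_left part1[OF t, unfolded has_vector_derivative_def]] .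
    moreover have "(\<Sum>j\<in>UNIV. cross3 (q t $ j) (grad Vext (q t) $ j)) \<bullet> b = 0"
      by (simp add: g inner_sum_left dot_cross_self)
    ultimately have "((\<lambda>s. angmom m (q s) (v s) \<bullet> b) has_derivative (\<lambda>h. h * 0)) (at t within ?I)"
      by (simp add: inner_sum_left)
    then show "((\<lambda>s. angmom m (q s) (v s) \<bullet> b) has_real_derivative 0) (at t within ?I)"
      unfolding has_field_derivative_def by (simp add: mult_zero_left[abs_def])
  qed
qed

end
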